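(* Let $$E=\begin{bmatrix} J_{k,a} & J_{k,b} & -J_{k,c} & -J_{k,d} & J_{k,e} & -J_{k,f} & 0 & 0 \\ -J_{k,a} & -J_{k,b} & J_{k,c} & J_{k,d} & -J_{k,e} & J_{k,f} & 0 & 0 \\ J_{l,a} & -J_{l,b} & J_{l,c} & -J_{l,d} & 0 & 0 & J_{l,g} & -J_{l,h} \\ -J_{l,a} & J_{l,b} & -J_{l,c} & J_{l,d} & 0 & 0 & -J_{l,g} & J_{l,h} \\ \end{bmatrix}$$ where any column index in each block is a nonnegative integer, and $k,l>0$, $a+b+c+d>0$, $e+f>0$, $g+h>0$, $E\mathbf{1}=0$ and $\mathbf{1}^TE=0^T$. Let \begin{align*} A=\begin{bmatrix} 0 & 0 & J_{k,c} & J_{k,d} & 0 & J_{k,f} & X_{11} & X_{12} \\ J_{k,a} & J_{k,b} & 0 & 0 & J_{k,e} & 0 & X_{21} & X_{22} \\ 0 & J_{l,b} & 0 & J_{l,d} & Y_{11} & Y_{12} & 0 & J_{l,h} \\ J_{l,a} & 0 & J_{l,c} & 0 & Y_{21} & Y_{22} & J_{l,g} & 0 \\ \end{bmatrix} \end{align*} where each block of $A$ is a $(0,1)$ matrix. Then, $A$ and $A+E$ are Gram mates if and only if the following conditions are satisfied: \begin{enumerate} \item $\mathbf{1}^TX_{1i}=\mathbf{1}^TX_{2i}$ and $\mathbf{1}^TY_{1i}=\mathbf{1}^TY_{2i}$ for $i=1,2$; \item $\begin{bmatrix} X_{11} & X_{12}\\ X_{21} & X_{22} \end{bmatrix}\begin{bmatrix}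 \mathbf{1}\\ -\mathbf{1} \end{bmatrix}=\frac{g-h}{2}\begin{bmatrix} \mathbf{1}\\ \mathbf{1} \end{bmatrix}$ and $\begin{bmatrix} Y_{11} & Y_{12}\\ Y_{21} & Y_{22} \end{bmatrix}\begin{bmatrix} \mathbf{1}\\ -\mathbf{1} \end{bmatrix}=\frac{e-f}{2}\begin{bmatrix} \mathbf{1}\\ \mathbf{1} \end{bmatrix}$ where $g-h$ and $e-f$ are even. \end{enumerate}
   Context: $J_{p,q}$ denotes the $p\times q$ all-ones matrix (absent if $p=0$ or $q=0$) and $\mathbf{1}$ an all-ones column vector of appropriate size. Two $(0,1)$ matrices $A\neq B$ are Gram mates if $AA^T=BB^T$ and $A^TA=B^TB$. *)

theory Defs
  imports "Jordan_Normal_Form.Matrix"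
begin

definition Jm :: "nat \<Rightarrow> nat \<Rightarrow> int mat" where
  "Jm p q = mat p q (\<lambda>_. 1)"

definition hcat :: "int mat \<Rightarrow> int mat \<Rightarrow> int mat" where
  "hcat A B = mat (dim_row A) (dim_col A + dim_col B)
     (\<lambda>(i,j). if j < dim_col A then A $$ (i,j) else B $$ (i, j - dim_col A))"

definition vcat :: "int mat \<Rightarrow> int mat \<Rightarrow> int mat" where
  "vcat A B = mat (dim_row A + dim_row B) (dim_col A)
     (\<lambda>(i,j). if i < dim_row A then A $$ (i,j) else B $$ (i - dim_row A, j))"

definition hcats :: "nat \<Rightarrow> int mat list \<Rightarrow> int mat" where
  "hcats r Bs = foldr hcat Bs (0\<^sub>m r 0)"

definition vcats :: "nat \<Rightarrow> int mat list \<Rightarrow> int mat" where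
  "vcats c Bs = foldr vcat Bs (0\<^sub>m 0 c)"

definition ones :: "nat \<Rightarrow> int vec" where
  "ones n = vec n (\<lambda>_. 1)"

definition zero_one_mat :: "int mat \<Rightarrow> bool" where
  "zero_one_mat A \<longleftrightarrow> (\<forall>i<dim_row A. \<forall>j<dim_col A. A $$ (i,j) \<in> {0,1})"

definition gram_mates :: "int mat \<Rightarrow> int mat \<Rightarrow> bool" where
  "gram_mates A B \<longleftrightarrow> zero_one_mat A \<and> zero_one_mat B \<and>
     dim_row A = dim_row B \<and> dim_col A = dim_col B \<and> A \<noteq> B \<and>
     A * transpose_mat A = B * transpose_mat B \<and>
     transpose_mat A * A = transpose_mat B * B"

end

theory Submission
  imports Defs
begin


lemma hcat_dims[simp]: "dim_row (hcat A B) = dim_row A" "dim_col (hcat A B) = dim_col A + dim_col B"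
  by (simp_all add: hcat_def)
lemma vcat_dims[simp]: "dim_row (vcat A B) = dim_row A + dim_row B" "dim_col (vcat A B) = dim_col A"
  by (simp_all add: vcat_def)
lemma hcats_simps[simp]: "hcats r [] = 0\<^sub>m r 0" "hcats r (B # Bs) = hcat B (hcats r Bs)"
  by (simp_all add: hcats_def)
lemma vcats_simps[simp]: "vcats c [] = 0\<^sub>m 0 c" "vcats c (B # Bs) = vcat B (vcats c Bs)"
  by (simp_all add: vcats_def)
lemma Jm_simps[simp]: "dim_row (Jm p q) = p" "dim_col (Jm p q) = q"
  by (simp_all add: Jm_def)
lemma Jm_index: "i < p \<Longrightarrow> j < q \<Longrightarrow> Jm p q $$ (i,j) = 1"
  by (simp add: Jm_def)
lemma ones_dim[simp]: "dim_vec (ones n) = n" by (simp add: ones_def)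

lemma row_hcat[simp]: "i < dim_row A \<Longrightarrow> dim_row B = dim_row A \<Longrightarrow> row (hcat A B) i = row A i @\<^sub>v row B i"
  by (rule eq_vecI) (auto simp: hcat_def)
lemma col_vcat[simp]: "j < dim_col A \<Longrightarrow> dim_col B = dim_col A \<Longrightarrow> col (vcat A B) j = col A j @\<^sub>v col B j"
  by (rule eq_vecI) (auto simp: vcat_def)
lemma row_vcat[simp]: "i < dim_row A + dim_row B \<Longrightarrow> dim_col B = dim_col A \<Longrightarrow>
   row (vcat A B) i = (if i < dim_row A then row A i else row B (i - dim_row A))"
  by (rule eq_vecI) (auto simp: vcat_def)
lemma col_hcat[simp]: "j < dim_col A + dim_col B \<Longrightarrow> dim_row B = dim_row A \<Longrightarrow>
   col (hcat A B) j = (if j < dim_col A then col A j else col B (j - dim_col A))"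
  by (rule eq_vecI) (auto simp: hcat_def)
lemma row_Jm[simp]: "i < p \<Longrightarrow> row (Jm p q) i = ones q"
  by (rule eq_vecI) (auto simp: Jm_def ones_def)
lemma col_Jm[simp]: "j < q \<Longrightarrow> col (Jm p q) j = ones p"
  by (rule eq_vecI) (auto simp: Jm_def ones_def)
lemma append_zero0[simp]: "v @\<^sub>v vec 0 f = v"
  by (rule eq_vecI) auto

lemma sprod_append[simp]: "dim_vec v1 = dim_vec w1 \<Longrightarrow> dim_vec v2 = dim_vec w2 \<Longrightarrow>
   (v1 @\<^sub>v v2) \<bullet> (w1 @\<^sub>v w2) = v1 \<bullet> w1 + v2 \<bullet> w2"
  for v1 v2 w1 w2 :: "int vec"
proof -
  assume h: "dim_vec v1 = dim_vec w1" "dim_vec v2 = dim_vec w2"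
  show ?thesis
    by (rule scalar_prod_append) (use h in \<open>auto intro!: carrier_vecI\<close>)
qed
lemma sprod_zero[simp]: "dim_vec v = n \<Longrightarrow> 0\<^sub>v n \<bullet> v = 0" "dim_vec v = n \<Longrightarrow> v \<bullet> 0\<^sub>v n = (0::int)"
  by (simp_all add: scalar_prod_def)
lemma sprod_ones_ones[simp]: "ones n \<bullet> ones n = int n"
  by (simp add: ones_def scalar_prod_def)
lemma sprod_ones_comm: "dim_vec v = n \<Longrightarrow> v \<bullet> ones n = ones n \<bullet> (v :: int vec)"
  by (simp add: ones_def scalar_prod_def)


lemma row_ones_comm[simp]: "dim_vec (row M i) = n \<Longrightarrow> row M i \<bullet> ones n = ones n \<bullet> (row M i :: int vec)"
  by (rule sprod_ones_comm) simp
lemma col_ones_comm[simp]: "dim_vec (col M i) = n \<Longrightarrow> col M i \<bullet> ones n = ones n \<bullet> (col M i :: int vec)"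
  by (rule sprod_ones_comm) simp

lemma add_vcat: "dim_row A = dim_row C \<Longrightarrow> dim_row B = dim_row D \<Longrightarrow> dim_col A = dim_col C \<Longrightarrow>
  dim_col B = dim_col A \<Longrightarrow> dim_col D = dim_col C \<Longrightarrow> vcat A B + vcat C D = vcat (A + C) (B + D)"
  by (rule eq_matI) (auto simp: vcat_def)
lemma add_hcat: "dim_row A = dim_row C \<Longrightarrow> dim_col A = dim_col C \<Longrightarrow> dim_row B = dim_row A \<Longrightarrow>
  dim_row D = dim_row C \<Longrightarrow> dim_col B = dim_col D \<Longrightarrow> hcat A B + hcat C D = hcat (A + C) (B + D)"
  by (rule eq_matI) (auto simp: hcat_def)
lemma Jm_add_neg: "Jm p q + - Jm p q = 0\<^sub>m p q"
  by (rule eq_matI) (auto simp: Jm_def)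
lemma zero_add_Jm: "0\<^sub>m p q + Jm p q = Jm p q"
  by (rule eq_matI) (auto simp: Jm_def)
lemma add_zero_r: "dim_row M = p \<Longrightarrow> dim_col M = q \<Longrightarrow> M + 0\<^sub>m p q = (M :: int mat)"
  by (rule eq_matI) auto

lemma zo_hcat: "zero_one_mat A \<Longrightarrow> zero_one_mat B \<Longrightarrow> dim_row B = dim_row A \<Longrightarrow> zero_one_mat (hcat A B)"
  by (auto simp: zero_one_mat_def hcat_def)
lemma zo_vcat: "zero_one_mat A \<Longrightarrow> zero_one_mat B \<Longrightarrow> dim_col B = dim_col A \<Longrightarrow> zero_one_mat (vcat A B)"
  by (auto simp: zero_one_mat_def vcat_def)
lemma zo_Jm: "zero_one_mat (Jm p q)" by (auto simp: zero_one_mat_def Jm_def)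
lemma zo_0m: "zero_one_mat (0\<^sub>m p q)" by (auto simp: zero_one_mat_def)

lemma gram_rows: "dim_row A = dim_row B \<Longrightarrow> dim_col A = dim_col B \<Longrightarrow>
  (A * transpose_mat A = B * transpose_mat B) \<longleftrightarrow>
  (\<forall>i<dim_row A. \<forall>j<dim_row A. row A i \<bullet> row A j = row B i \<bullet> row B j)"
  by (auto simp: mat_eq_iff)
lemma gram_cols: "dim_row A = dim_row B \<Longrightarrow> dim_col A = dim_col B \<Longrightarrow>
  (transpose_mat A * A = transpose_mat B * B) \<longleftrightarrow>
  (\<forall>i<dim_col A. \<forall>j<dim_col A. col A i \<bullet> col A j = col B i \<bullet> col B j)"
  by (auto simp: mat_eq_iff)

lemma split4: "i < 2*k+2*l \<Longrightarrow> (\<And>s. s<k \<Longrightarrow> P s) \<Longrightarrow> (\<And>s. s<k \<Longrightarrow> P (k+s)) \<Longrightarrow>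
   (\<And>s. s<l \<Longrightarrow> P (k+k+s)) \<Longrightarrow> (\<And>s. s<l \<Longrightarrow> P (k+k+l+s)) \<Longrightarrow> P i"
  for i k l :: nat
proof -
  assume h: "i < 2*k+2*l" "\<And>s. s<k \<Longrightarrow> P s" "\<And>s. s<k \<Longrightarrow> P (k+s)"
   "\<And>s. s<l \<Longrightarrow> P (k+k+s)" "\<And>s. s<l \<Longrightarrow> P (k+k+l+s)"
  show "P i"
  proof (cases "i < k")
    case True then show ?thesis using h(2) by blast
  next
    case F1: False
    show ?thesis
    proof (cases "i < k+k")
      case True then show ?thesis using h(3)[of "i-k"] F1 by simp
    next
      case F2: False
      show ?thesis
      proof (cases "i < k+k+l")
        case True then show ?thesis using h(4)[of "i-k-k"] F2 by simp
      next
        case False then show ?thesis using h(5)[of "i-k-k-l"] h(1) by simp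
      qed
    qed
  qed
qed

lemma split8: "j < a+b+c+d+e+f+g+h \<Longrightarrow> (\<And>t. t<a \<Longrightarrow> P t) \<Longrightarrow> (\<And>t. t<b \<Longrightarrow> P (a+t)) \<Longrightarrow>
   (\<And>t. t<c \<Longrightarrow> P (a+b+t)) \<Longrightarrow> (\<And>t. t<d \<Longrightarrow> P (a+b+c+t)) \<Longrightarrow>
   (\<And>t. t<e \<Longrightarrow> P (a+b+c+d+t)) \<Longrightarrow> (\<And>t. t<f \<Longrightarrow> P (a+b+c+d+e+t)) \<Longrightarrow>
   (\<And>t. t<g \<Longrightarrow> P (a+b+c+d+e+f+t)) \<Longrightarrow> (\<And>t. t<h \<Longrightarrow> P (a+b+c+d+e+f+g+t)) \<Longrightarrow> P j"
  for a b c d e f g h :: nat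
  apply (cases "j < a", blast)
  apply (cases "j < a+b", metis add_diff_inverse_nat add_less_imp_less_left)
  apply (cases "j < a+b+c", metis add_diff_inverse_nat add_less_imp_less_left)
  apply (cases "j < a+b+c+d", metis add_diff_inverse_nat add_less_imp_less_left)
  apply (cases "j < a+b+c+d+e", metis add_diff_inverse_nat add_less_imp_less_left)
  apply (cases "j < a+b+c+d+e+f", metis add_diff_inverse_nat add_less_imp_less_left)
  apply (cases "j < a+b+c+d+e+f+g", metis add_diff_inverse_nat add_less_imp_less_left)
  apply (metis add_diff_inverse_nat add_less_imp_less_left)
  done

lemma sum_swap_ones: "X \<in> carrier_mat p q \<Longrightarrow>
  (\<Sum>s<p. ones q \<bullet> row X s) = (\<Sum>t<q. ones p \<bullet> col X t)"
  unfolding scalar_prod_def ones_def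
  by (simp add: atLeast0LessThan) (rule sum.swap)

lemma tvec_eq: "dim_row X = p \<Longrightarrow> dim_row X' = p \<Longrightarrow> dim_col X' = dim_col X \<Longrightarrow>
  (transpose_mat X *\<^sub>v ones p = transpose_mat X' *\<^sub>v ones p) \<longleftrightarrow>
  (\<forall>t<dim_col X. ones p \<bullet> col X t = ones p \<bullet> col X' t)"
  by (auto simp: vec_eq_iff)


lemma all_split2: "(\<forall>i<p+p. Q i) \<longleftrightarrow> (\<forall>s<p. Q s \<and> Q (p+s))" for p :: nat
proof
  assume "\<forall>i<p+p. Q i" then show "\<forall>s<p. Q s \<and> Q (p+s)" by auto
next
  assume h: "\<forall>s<p. Q s \<and> Q (p+s)"
  show "\<forall>i<p+p. Q i"
  proof (intro allI impI)
    fix i assume "i < p+p"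
    then show "Q i" using h[rule_format, of "i-p"] h[rule_format, of i]
      by (cases "i < p") auto
  qed
qed

lemma vprod:
  assumes c: "X1 \<in> carrier_mat p q1" "X2 \<in> carrier_mat p q2" "X3 \<in> carrier_mat p q1" "X4 \<in> carrier_mat p q2"
  shows "(vcats (q1+q2) [hcats p [X1,X2], hcats p [X3,X4]] *\<^sub>v (ones q1 @\<^sub>v - ones q2) = z \<cdot>\<^sub>v ones (2*p)) \<longleftrightarrow>
  (\<forall>s<p. ones q1 \<bullet> row X1 s - ones q2 \<bullet> row X2 s = z \<and> ones q1 \<bullet> row X3 s - ones q2 \<bullet> row X4 s = z)"
  (is "?L \<longleftrightarrow> ?R")
proof -
  define W where "W = vcats (q1+q2) [hcats p [X1,X2], hcats p [X3,X4]]"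
  have dW: "dim_row W = p + p" using c by (simp add: W_def)
  have r1: "s < p \<Longrightarrow> row W s = row X1 s @\<^sub>v row X2 s" for s using c by (simp add: W_def)
  have r2: "s < p \<Longrightarrow> row W (p+s) = row X3 s @\<^sub>v row X4 s" for s using c by (simp add: W_def)
  have "?L \<longleftrightarrow> (\<forall>i<p+p. (W *\<^sub>v (ones q1 @\<^sub>v - ones q2)) $ i = (z \<cdot>\<^sub>v ones (2*p)) $ i)"
    unfolding W_def[symmetric] by (simp add: vec_eq_iff dW mult_2)
  also have "\<dots> \<longleftrightarrow> (\<forall>i<p+p. row W i \<bullet> (ones q1 @\<^sub>v - ones q2) = z)"
    using dW by (simp add: ones_def)
  also have "\<dots> \<longleftrightarrow> ?R"
    unfolding all_split2 using c by (simp add: r1 r2)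
  finally show ?thesis .
qed


theorem theorem4p15:
  fixes k l a b c d e f g h :: nat
    and X11 X12 X21 X22 Y11 Y12 Y21 Y22 :: "int mat"
  defines "n \<equiv> a + b + c + d + e + f + g + h"
    and "m \<equiv> 2 * k + 2 * l"
  defines "E \<equiv> vcats n
     [hcats k [Jm k a, Jm k b, - Jm k c, - Jm k d, Jm k e, - Jm k f, 0\<^sub>m k g, 0\<^sub>m k h],
      hcats k [- Jm k a, - Jm k b, Jm k c, Jm k d, - Jm k e, Jm k f, 0\<^sub>m k g, 0\<^sub>m k h],
      hcats l [Jm l a, - Jm l b, Jm l c, - Jm l d, 0\<^sub>m l e, 0\<^sub>m l f, Jm l g, - Jm l h],
      hcats l [- Jm l a, Jm l b, - Jm l c, Jm l d, 0\<^sub>m l e, 0\<^sub>m l f, - Jm l g, Jm l h]]"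
  defines "A \<equiv> vcats n
     [hcats k [0\<^sub>m k a, 0\<^sub>m k b, Jm k c, Jm k d, 0\<^sub>m k e, Jm k f, X11, X12],
      hcats k [Jm k a, Jm k b, 0\<^sub>m k c, 0\<^sub>m k d, Jm k e, 0\<^sub>m k f, X21, X22],
      hcats l [0\<^sub>m l a, Jm l b, 0\<^sub>m l c, Jm l d, Y11, Y12, 0\<^sub>m l g, Jm l h],
      hcats l [Jm l a, 0\<^sub>m l b, Jm l c, 0\<^sub>m l d, Y21, Y22, Jm l g, 0\<^sub>m l h]]"
  assumes "k > 0" and "l > 0"
    and "a + b + c + d > 0" and "e + f > 0" and "g + h > 0"
    and "E *\<^sub>v ones n = 0\<^sub>v m"
    and "transpose_mat E *\<^sub>v ones m = 0\<^sub>v n"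
    and "X11 \<in> carrier_mat k g" and "X12 \<in> carrier_mat k h"
    and "X21 \<in> carrier_mat k g" and "X22 \<in> carrier_mat k h"
    and "Y11 \<in> carrier_mat l e" and "Y12 \<in> carrier_mat l f"
    and "Y21 \<in> carrier_mat l e" and "Y22 \<in> carrier_mat l f"
    and "zero_one_mat X11" and "zero_one_mat X12"
    and "zero_one_mat X21" and "zero_one_mat X22"
    and "zero_one_mat Y11" and "zero_one_mat Y12"
    and "zero_one_mat Y21" and "zero_one_mat Y22"
  shows "gram_mates A (A + E) \<longleftrightarrow>
    ( transpose_mat X11 *\<^sub>v ones k = transpose_mat X21 *\<^sub>v ones k
    \<and> transpose_mat X12 *\<^sub>v ones k = transpose_mat X22 *\<^sub>v ones k
    \<and> transpose_mat Y11 *\<^sub>v ones l = transpose_mat Y21 *\<^sub>v ones l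
    \<and> transpose_mat Y12 *\<^sub>v ones l = transpose_mat Y22 *\<^sub>v ones l
    \<and> even (int g - int h) \<and> even (int e - int f)
    \<and> vcats (g + h) [hcats k [X11, X12], hcats k [X21, X22]] *\<^sub>v (ones g @\<^sub>v (- ones h))
        = ((int g - int h) div 2) \<cdot>\<^sub>v ones (2 * k)
    \<and> vcats (e + f) [hcats l [Y11, Y12], hcats l [Y21, Y22]] *\<^sub>v (ones e @\<^sub>v (- ones f))
        = ((int e - int f) div 2) \<cdot>\<^sub>v ones (2 * l))"
proof -
  have dims: "dim_row X11 = k" "dim_col X11 = g" "dim_row X12 = k" "dim_col X12 = h"
    "dim_row X21 = k" "dim_col X21 = g" "dim_row X22 = k" "dim_col X22 = h"
    "dim_row Y11 = l" "dim_col Y11 = e" "dim_row Y12 = l" "dim_col Y12 = f"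
    "dim_row Y21 = l" "dim_col Y21 = e" "dim_row Y22 = l" "dim_col Y22 = f"
    using assms by auto
  define Bm where "Bm \<equiv> vcats n
     [hcats k [Jm k a, Jm k b, 0\<^sub>m k c, 0\<^sub>m k d, Jm k e, 0\<^sub>m k f, X11, X12],
      hcats k [0\<^sub>m k a, 0\<^sub>m k b, Jm k c, Jm k d, 0\<^sub>m k e, Jm k f, X21, X22],
      hcats l [Jm l a, 0\<^sub>m l b, Jm l c, 0\<^sub>m l d, Y11, Y12, Jm l g, 0\<^sub>m l h],
      hcats l [0\<^sub>m l a, Jm l b, 0\<^sub>m l c, Jm l d, Y21, Y22, 0\<^sub>m l g, Jm l h]]"
  have AE: "A + E = Bm"
    unfolding A_def E_def Bm_def n_def
    by (simp add: add_vcat add_hcat dims Jm_add_neg zero_add_Jm add_zero_r)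
  have Adim: "dim_row A = m" "dim_col A = n" unfolding A_def m_def n_def by (simp_all add: dims)
  have Bdim: "dim_row Bm = m" "dim_col Bm = n" unfolding Bm_def m_def n_def by (simp_all add: dims)
  have zoA: "zero_one_mat A" unfolding A_def n_def
    using assms by (simp add: zo_hcat zo_vcat zo_Jm zo_0m dims)
  have zoB: "zero_one_mat Bm" unfolding Bm_def n_def
    using assms by (simp add: zo_hcat zo_vcat zo_Jm zo_0m dims)
  have onesn: "ones n = ones a @\<^sub>v ones b @\<^sub>v ones c @\<^sub>v ones d @\<^sub>v ones e @\<^sub>v ones f @\<^sub>v ones g @\<^sub>v ones h"
    by (rule eq_vecI) (auto simp: n_def ones_def)
  have "(E *\<^sub>v ones n) $ 0 = 0" using \<open>E *\<^sub>v ones n = 0\<^sub>v m\<close> \<open>k > 0\<close> unfolding m_def by simp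
  then have H1: "int a + int b + int e = int c + int d + int f"
    using \<open>k > 0\<close> unfolding E_def onesn by (simp add: n_def)
  have "(E *\<^sub>v ones n) $ (k+k) = 0" using \<open>E *\<^sub>v ones n = 0\<^sub>v m\<close> \<open>l > 0\<close> unfolding m_def by simp
  then have H2: "int a + int c + int g = int b + int d + int h"
    using \<open>l > 0\<close> unfolding E_def onesn by (simp add: n_def)

  have rA1: "\<And>s. s < k \<Longrightarrow> row A s = 0\<^sub>v a @\<^sub>v 0\<^sub>v b @\<^sub>v ones c @\<^sub>v ones d @\<^sub>v 0\<^sub>v e @\<^sub>v ones f @\<^sub>v row X11 s @\<^sub>v row X12 s"
    unfolding A_def n_def by (simp add: dims)
  have rA2: "\<And>s. s < k \<Longrightarrow> row A (k+s) = ones a @\<^sub>v ones b @\<^sub>v 0\<^sub>v c @\<^sub>v 0\<^sub>v d @\<^sub>v ones e @\<^sub>v 0\<^sub>v f @\<^sub>v row X21 s @\<^sub>v row X22 s"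
    unfolding A_def n_def by (simp add: dims)
  have rA3: "\<And>s. s < l \<Longrightarrow> row A (k+k+s) = 0\<^sub>v a @\<^sub>v ones b @\<^sub>v 0\<^sub>v c @\<^sub>v ones d @\<^sub>v row Y11 s @\<^sub>v row Y12 s @\<^sub>v 0\<^sub>v g @\<^sub>v ones h"
    unfolding A_def n_def by (simp add: dims)
  have rA4: "\<And>s. s < l \<Longrightarrow> row A (k+k+l+s) = ones a @\<^sub>v 0\<^sub>v b @\<^sub>v ones c @\<^sub>v 0\<^sub>v d @\<^sub>v row Y21 s @\<^sub>v row Y22 s @\<^sub>v ones g @\<^sub>v 0\<^sub>v h"
    unfolding A_def n_def by (simp add: dims)
  have rB1: "\<And>s. s < k \<Longrightarrow> row Bm s = ones a @\<^sub>v ones b @\<^sub>v 0\<^sub>v c @\<^sub>v 0\<^sub>v d @\<^sub>v ones e @\<^sub>v 0\<^sub>v f @\<^sub>v row X11 s @\<^sub>v row X12 s"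
    unfolding Bm_def n_def by (simp add: dims)
  have rB2: "\<And>s. s < k \<Longrightarrow> row Bm (k+s) = 0\<^sub>v a @\<^sub>v 0\<^sub>v b @\<^sub>v ones c @\<^sub>v ones d @\<^sub>v 0\<^sub>v e @\<^sub>v ones f @\<^sub>v row X21 s @\<^sub>v row X22 s"
    unfolding Bm_def n_def by (simp add: dims)
  have rB3: "\<And>s. s < l \<Longrightarrow> row Bm (k+k+s) = ones a @\<^sub>v 0\<^sub>v b @\<^sub>v ones c @\<^sub>v 0\<^sub>v d @\<^sub>v row Y11 s @\<^sub>v row Y12 s @\<^sub>v ones g @\<^sub>v 0\<^sub>v h"
    unfolding Bm_def n_def by (simp add: dims)
  have rB4: "\<And>s. s < l \<Longrightarrow> row Bm (k+k+l+s) = 0\<^sub>v a @\<^sub>v ones b @\<^sub>v 0\<^sub>v c @\<^sub>v ones d @\<^sub>v row Y21 s @\<^sub>v row Y22 s @\<^sub>v 0\<^sub>v g @\<^sub>v ones h"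
    unfolding Bm_def n_def by (simp add: dims)
  have cA1: "\<And>t. t < a \<Longrightarrow> col A (t) = 0\<^sub>v k @\<^sub>v ones k @\<^sub>v 0\<^sub>v l @\<^sub>v ones l"
    unfolding A_def n_def by (simp add: dims)
  have cB1: "\<And>t. t < a \<Longrightarrow> col Bm (t) = ones k @\<^sub>v 0\<^sub>v k @\<^sub>v ones l @\<^sub>v 0\<^sub>v l"
    unfolding Bm_def n_def by (simp add: dims)
  have cA2: "\<And>t. t < b \<Longrightarrow> col A (a+t) = 0\<^sub>v k @\<^sub>v ones k @\<^sub>v ones l @\<^sub>v 0\<^sub>v l"
    unfolding A_def n_def by (simp add: dims)
  have cB2: "\<And>t. t < b \<Longrightarrow> col Bm (a+t) = ones k @\<^sub>v 0\<^sub>v k @\<^sub>v 0\<^sub>v l @\<^sub>v ones l"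
    unfolding Bm_def n_def by (simp add: dims)
  have cA3: "\<And>t. t < c \<Longrightarrow> col A (a+b+t) = ones k @\<^sub>v 0\<^sub>v k @\<^sub>v 0\<^sub>v l @\<^sub>v ones l"
    unfolding A_def n_def by (simp add: dims)
  have cB3: "\<And>t. t < c \<Longrightarrow> col Bm (a+b+t) = 0\<^sub>v k @\<^sub>v ones k @\<^sub>v ones l @\<^sub>v 0\<^sub>v l"
    unfolding Bm_def n_def by (simp add: dims)
  have cA4: "\<And>t. t < d \<Longrightarrow> col A (a+b+c+t) = ones k @\<^sub>v 0\<^sub>v k @\<^sub>v ones l @\<^sub>v 0\<^sub>v l"
    unfolding A_def n_def by (simp add: dims)
  have cB4: "\<And>t. t < d \<Longrightarrow> col Bm (a+b+c+t) = 0\<^sub>v k @\<^sub>v ones k @\<^sub>v 0\<^sub>v l @\<^sub>v ones l"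
    unfolding Bm_def n_def by (simp add: dims)
  have cA5: "\<And>t. t < e \<Longrightarrow> col A (a+b+c+d+t) = 0\<^sub>v k @\<^sub>v ones k @\<^sub>v col Y11 t @\<^sub>v col Y21 t"
    unfolding A_def n_def by (simp add: dims)
  have cB5: "\<And>t. t < e \<Longrightarrow> col Bm (a+b+c+d+t) = ones k @\<^sub>v 0\<^sub>v k @\<^sub>v col Y11 t @\<^sub>v col Y21 t"
    unfolding Bm_def n_def by (simp add: dims)
  have cA6: "\<And>t. t < f \<Longrightarrow> col A (a+b+c+d+e+t) = ones k @\<^sub>v 0\<^sub>v k @\<^sub>v col Y12 t @\<^sub>v col Y22 t"
    unfolding A_def n_def by (simp add: dims)
  have cB6: "\<And>t. t < f \<Longrightarrow> col Bm (a+b+c+d+e+t) = 0\<^sub>v k @\<^sub>v ones k @\<^sub>v col Y12 t @\<^sub>v col Y22 t"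
    unfolding Bm_def n_def by (simp add: dims)
  have cA7: "\<And>t. t < g \<Longrightarrow> col A (a+b+c+d+e+f+t) = col X11 t @\<^sub>v col X21 t @\<^sub>v 0\<^sub>v l @\<^sub>v ones l"
    unfolding A_def n_def by (simp add: dims)
  have cB7: "\<And>t. t < g \<Longrightarrow> col Bm (a+b+c+d+e+f+t) = col X11 t @\<^sub>v col X21 t @\<^sub>v ones l @\<^sub>v 0\<^sub>v l"
    unfolding Bm_def n_def by (simp add: dims)
  have cA8: "\<And>t. t < h \<Longrightarrow> col A (a+b+c+d+e+f+g+t) = col X12 t @\<^sub>v col X22 t @\<^sub>v ones l @\<^sub>v 0\<^sub>v l"
    unfolding A_def n_def by (simp add: dims)
  have cB8: "\<And>t. t < h \<Longrightarrow> col Bm (a+b+c+d+e+f+g+t) = col X12 t @\<^sub>v col X22 t @\<^sub>v 0\<^sub>v l @\<^sub>v ones l"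
    unfolding Bm_def n_def by (simp add: dims)

  define w where "w = ones a @\<^sub>v ones b @\<^sub>v - ones c @\<^sub>v - ones d @\<^sub>v ones e @\<^sub>v - ones f @\<^sub>v 0\<^sub>v g @\<^sub>v 0\<^sub>v h"
  have neq: "A \<noteq> Bm"
  proof
    assume "A = Bm"
    then have "row A 0 \<bullet> w = row Bm 0 \<bullet> w" by simp
    moreover have "row A 0 \<bullet> w = - (int c + int d + int f)" using rA1[of 0] \<open>k>0\<close> by (simp add: w_def dims)
    moreover have "row Bm 0 \<bullet> w = int a + int b + int e" using rB1[of 0] \<open>k>0\<close> by (simp add: w_def dims)
    ultimately show False using H1 \<open>a+b+c+d>0\<close> \<open>e+f>0\<close> by linarith
  qed
  have gram: "gram_mates A (A + E) \<longleftrightarrow>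
      (\<forall>i<m. \<forall>j<m. row A i \<bullet> row A j = row Bm i \<bullet> row Bm j) \<and>
      (\<forall>i<n. \<forall>j<n. col A i \<bullet> col A j = col Bm i \<bullet> col Bm j)"
    unfolding gram_mates_def AE using zoA zoB neq by (simp add: Adim Bdim gram_rows gram_cols)
  have tv: "transpose_mat X11 *\<^sub>v ones k = transpose_mat X21 *\<^sub>v ones k \<longleftrightarrow> (\<forall>t<g. ones k \<bullet> col X11 t = ones k \<bullet> col X21 t)"
    "transpose_mat X12 *\<^sub>v ones k = transpose_mat X22 *\<^sub>v ones k \<longleftrightarrow> (\<forall>t<h. ones k \<bullet> col X12 t = ones k \<bullet> col X22 t)"
    "transpose_mat Y11 *\<^sub>v ones l = transpose_mat Y21 *\<^sub>v ones l \<longleftrightarrow> (\<forall>t<e. ones l \<bullet> col Y11 t = ones l \<bullet> col Y21 t)"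
    "transpose_mat Y12 *\<^sub>v ones l = transpose_mat Y22 *\<^sub>v ones l \<longleftrightarrow> (\<forall>t<f. ones l \<bullet> col Y12 t = ones l \<bullet> col Y22 t)"
    by (simp_all add: tvec_eq dims)
  have vp: "vcats (g + h) [hcats k [X11, X12], hcats k [X21, X22]] *\<^sub>v (ones g @\<^sub>v (- ones h))
        = ((int g - int h) div 2) \<cdot>\<^sub>v ones (2 * k) \<longleftrightarrow>
     (\<forall>s<k. ones g \<bullet> row X11 s - ones h \<bullet> row X12 s = (int g - int h) div 2 \<and>
            ones g \<bullet> row X21 s - ones h \<bullet> row X22 s = (int g - int h) div 2)"
    "vcats (e + f) [hcats l [Y11, Y12], hcats l [Y21, Y22]] *\<^sub>v (ones e @\<^sub>v (- ones f))
        = ((int e - int f) div 2) \<cdot>\<^sub>v ones (2 * l) \<longleftrightarrow>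
     (\<forall>s<l. ones e \<bullet> row Y11 s - ones f \<bullet> row Y12 s = (int e - int f) div 2 \<and>
            ones e \<bullet> row Y21 s - ones f \<bullet> row Y22 s = (int e - int f) div 2)"
    by (rule vprod; use assms in simp)+
  show ?thesis
    unfolding gram tv vp
  proof
    assume "(\<forall>i<m. \<forall>j<m. row A i \<bullet> row A j = row Bm i \<bullet> row Bm j) \<and>
      (\<forall>i<n. \<forall>j<n. col A i \<bullet> col A j = col Bm i \<bullet> col Bm j)"
    then have RE: "\<And>i j. i<m \<Longrightarrow> j<m \<Longrightarrow> row A i \<bullet> row A j = row Bm i \<bullet> row Bm j"
      and CE: "\<And>i j. i<n \<Longrightarrow> j<n \<Longrightarrow> col A i \<bullet> col A j = col Bm i \<bullet> col Bm j" by auto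
    have e1: "\<And>s t. s<k \<Longrightarrow> t<l \<Longrightarrow> (ones g \<bullet> row X11 s - ones h \<bullet> row X12 s) + (ones e \<bullet> row Y11 t - ones f \<bullet> row Y12 t) = int d - int a"
    proof -
      fix s t assume s: "s<k" and t: "t<l"
      have "row A s \<bullet> row A (k+k+t) = row Bm s \<bullet> row Bm (k+k+t)" using RE s t m_def by simp
      then show "?thesis s t" using s t by (simp add: rA1 rB1 rA3 rB3 dims; linarith)
    qed
    have e2: "\<And>s t. s<k \<Longrightarrow> t<l \<Longrightarrow> (ones g \<bullet> row X21 s - ones h \<bullet> row X22 s) - (ones e \<bullet> row Y11 t - ones f \<bullet> row Y12 t) = int b - int c"
    proof -
      fix s t assume s: "s<k" and t: "t<l"
      have "row A (k+s) \<bullet> row A (k+k+t) = row Bm (k+s) \<bullet> row Bm (k+k+t)" using RE s t m_def by simp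
      then show "?thesis s t" using s t by (simp add: rA2 rB2 rA3 rB3 dims; linarith)
    qed
    have e4: "\<And>s t. s<k \<Longrightarrow> t<l \<Longrightarrow> (ones g \<bullet> row X21 s - ones h \<bullet> row X22 s) + (ones e \<bullet> row Y21 t - ones f \<bullet> row Y22 t) = int d - int a"
    proof -
      fix s t assume s: "s<k" and t: "t<l"
      have "row A (k+s) \<bullet> row A (k+k+l+t) = row Bm (k+s) \<bullet> row Bm (k+k+l+t)" using RE s t m_def by simp
      then show "?thesis s t" using s t by (simp add: rA2 rB2 rA4 rB4 dims; linarith)
    qed
    have c1: "\<And>t. t<g \<Longrightarrow> ones k \<bullet> col X11 t = ones k \<bullet> col X21 t"
    proof -
      fix t assume t: "t<g"
      have jt: "a+b+c+d+e+f+t < n" using t n_def by simp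
      consider (A) "a>0" | (B) "b>0" | (C) "c>0" | (D) "d>0" using \<open>a+b+c+d>0\<close> by linarith
      then show "ones k \<bullet> col X11 t = ones k \<bullet> col X21 t"
      proof cases
        case A
        have "col A (0) \<bullet> col A (a+b+c+d+e+f+t) = col Bm (0) \<bullet> col Bm (a+b+c+d+e+f+t)"
          using CE jt A n_def by simp
        then show ?thesis
          using A by (simp add: cA1[OF A, simplified] cB1[OF A, simplified] cA7[OF t] cB7[OF t] dims)
      next
        case B
        have "col A (a+0) \<bullet> col A (a+b+c+d+e+f+t) = col Bm (a+0) \<bullet> col Bm (a+b+c+d+e+f+t)"
          using CE jt B n_def by simp
        then show ?thesis
          using B by (simp add: cA2[OF B, simplified] cB2[OF B, simplified] cA7[OF t] cB7[OF t] dims)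
      next
        case C
        have "col A (a+b+0) \<bullet> col A (a+b+c+d+e+f+t) = col Bm (a+b+0) \<bullet> col Bm (a+b+c+d+e+f+t)"
          using CE jt C n_def by simp
        then show ?thesis
          using C by (simp add: cA3[OF C, simplified] cB3[OF C, simplified] cA7[OF t] cB7[OF t] dims)
      next
        case D
        have "col A (a+b+c+0) \<bullet> col A (a+b+c+d+e+f+t) = col Bm (a+b+c+0) \<bullet> col Bm (a+b+c+d+e+f+t)"
          using CE jt D n_def by simp
        then show ?thesis
          using D by (simp add: cA4[OF D, simplified] cB4[OF D, simplified] cA7[OF t] cB7[OF t] dims)
      qed
    qed
    have c2: "\<And>t. t<h \<Longrightarrow> ones k \<bullet> col X12 t = ones k \<bullet> col X22 t"
    proof -
      fix t assume t: "t<h"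
      have jt: "a+b+c+d+e+f+g+t < n" using t n_def by simp
      consider (A) "a>0" | (B) "b>0" | (C) "c>0" | (D) "d>0" using \<open>a+b+c+d>0\<close> by linarith
      then show "ones k \<bullet> col X12 t = ones k \<bullet> col X22 t"
      proof cases
        case A
        have "col A (0) \<bullet> col A (a+b+c+d+e+f+g+t) = col Bm (0) \<bullet> col Bm (a+b+c+d+e+f+g+t)"
          using CE jt A n_def by simp
        then show ?thesis
          using A by (simp add: cA1[OF A, simplified] cB1[OF A, simplified] cA8[OF t] cB8[OF t] dims)
      next
        case B
        have "col A (a+0) \<bullet> col A (a+b+c+d+e+f+g+t) = col Bm (a+0) \<bullet> col Bm (a+b+c+d+e+f+g+t)"
          using CE jt B n_def by simp
        then show ?thesis
          using B by (simp add: cA2[OF B, simplified] cB2[OF B, simplified] cA8[OF t] cB8[OF t] dims)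
      next
        case C
        have "col A (a+b+0) \<bullet> col A (a+b+c+d+e+f+g+t) = col Bm (a+b+0) \<bullet> col Bm (a+b+c+d+e+f+g+t)"
          using CE jt C n_def by simp
        then show ?thesis
          using C by (simp add: cA3[OF C, simplified] cB3[OF C, simplified] cA8[OF t] cB8[OF t] dims)
      next
        case D
        have "col A (a+b+c+0) \<bullet> col A (a+b+c+d+e+f+g+t) = col Bm (a+b+c+0) \<bullet> col Bm (a+b+c+d+e+f+g+t)"
          using CE jt D n_def by simp
        then show ?thesis
          using D by (simp add: cA4[OF D, simplified] cB4[OF D, simplified] cA8[OF t] cB8[OF t] dims)
      qed
    qed
    have c3: "\<And>t. t<e \<Longrightarrow> ones l \<bullet> col Y11 t = ones l \<bullet> col Y21 t"
    proof -
      fix t assume t: "t<e"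
      have jt: "a+b+c+d+t < n" using t n_def by simp
      consider (A) "a>0" | (B) "b>0" | (C) "c>0" | (D) "d>0" using \<open>a+b+c+d>0\<close> by linarith
      then show "ones l \<bullet> col Y11 t = ones l \<bullet> col Y21 t"
      proof cases
        case A
        have "col A (0) \<bullet> col A (a+b+c+d+t) = col Bm (0) \<bullet> col Bm (a+b+c+d+t)"
          using CE jt A n_def by simp
        then show ?thesis
          using A by (simp add: cA1[OF A, simplified] cB1[OF A, simplified] cA5[OF t] cB5[OF t] dims)
      next
        case B
        have "col A (a+0) \<bullet> col A (a+b+c+d+t) = col Bm (a+0) \<bullet> col Bm (a+b+c+d+t)"
          using CE jt B n_def by simp
        then show ?thesis
          using B by (simp add: cA2[OF B, simplified] cB2[OF B, simplified] cA5[OF t] cB5[OF t] dims)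
      next
        case C
        have "col A (a+b+0) \<bullet> col A (a+b+c+d+t) = col Bm (a+b+0) \<bullet> col Bm (a+b+c+d+t)"
          using CE jt C n_def by simp
        then show ?thesis
          using C by (simp add: cA3[OF C, simplified] cB3[OF C, simplified] cA5[OF t] cB5[OF t] dims)
      next
        case D
        have "col A (a+b+c+0) \<bullet> col A (a+b+c+d+t) = col Bm (a+b+c+0) \<bullet> col Bm (a+b+c+d+t)"
          using CE jt D n_def by simp
        then show ?thesis
          using D by (simp add: cA4[OF D, simplified] cB4[OF D, simplified] cA5[OF t] cB5[OF t] dims)
      qed
    qed
    have c4: "\<And>t. t<f \<Longrightarrow> ones l \<bullet> col Y12 t = ones l \<bullet> col Y22 t"
    proof -
      fix t assume t: "t<f"
      have jt: "a+b+c+d+e+t < n" using t n_def by simp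
      consider (A) "a>0" | (B) "b>0" | (C) "c>0" | (D) "d>0" using \<open>a+b+c+d>0\<close> by linarith
      then show "ones l \<bullet> col Y12 t = ones l \<bullet> col Y22 t"
      proof cases
        case A
        have "col A (0) \<bullet> col A (a+b+c+d+e+t) = col Bm (0) \<bullet> col Bm (a+b+c+d+e+t)"
          using CE jt A n_def by simp
        then show ?thesis
          using A by (simp add: cA1[OF A, simplified] cB1[OF A, simplified] cA6[OF t] cB6[OF t] dims)
      next
        case B
        have "col A (a+0) \<bullet> col A (a+b+c+d+e+t) = col Bm (a+0) \<bullet> col Bm (a+b+c+d+e+t)"
          using CE jt B n_def by simp
        then show ?thesis
          using B by (simp add: cA2[OF B, simplified] cB2[OF B, simplified] cA6[OF t] cB6[OF t] dims)
      next
        case C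
        have "col A (a+b+0) \<bullet> col A (a+b+c+d+e+t) = col Bm (a+b+0) \<bullet> col Bm (a+b+c+d+e+t)"
          using CE jt C n_def by simp
        then show ?thesis
          using C by (simp add: cA3[OF C, simplified] cB3[OF C, simplified] cA6[OF t] cB6[OF t] dims)
      next
        case D
        have "col A (a+b+c+0) \<bullet> col A (a+b+c+d+e+t) = col Bm (a+b+c+0) \<bullet> col Bm (a+b+c+d+e+t)"
          using CE jt D n_def by simp
        then show ?thesis
          using D by (simp add: cA4[OF D, simplified] cB4[OF D, simplified] cA6[OF t] cB6[OF t] dims)
      qed
    qed
    define y0 where "y0 = ones e \<bullet> row Y11 0 - ones f \<bullet> row Y12 0"
    have r1: "\<And>s. s<k \<Longrightarrow> ones g \<bullet> row X11 s - ones h \<bullet> row X12 s = int d - int a - y0"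
      using e1 \<open>l>0\<close> unfolding y0_def by (metis add_diff_cancel_right')
    have r2: "\<And>s. s<k \<Longrightarrow> ones g \<bullet> row X21 s - ones h \<bullet> row X22 s = int b - int c + y0"
      using e2 \<open>l>0\<close> unfolding y0_def by (metis diff_add_cancel)
    have cX11: "X11 \<in> carrier_mat k g" and cX12: "X12 \<in> carrier_mat k h"
      and cX21: "X21 \<in> carrier_mat k g" and cX22: "X22 \<in> carrier_mat k h" using assms by auto
    have "(\<Sum>s<k. ones g \<bullet> row X11 s - ones h \<bullet> row X12 s)
        = (\<Sum>s<k. ones g \<bullet> row X11 s) - (\<Sum>s<k. ones h \<bullet> row X12 s)" by (simp add: sum_subtractf)
    also have "\<dots> = (\<Sum>t<g. ones k \<bullet> col X11 t) - (\<Sum>t<h. ones k \<bullet> col X12 t)"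
      using sum_swap_ones[OF cX11] sum_swap_ones[OF cX12] by simp
    also have "\<dots> = (\<Sum>t<g. ones k \<bullet> col X21 t) - (\<Sum>t<h. ones k \<bullet> col X22 t)"
      using c1 c2 by simp
    also have "\<dots> = (\<Sum>s<k. ones g \<bullet> row X21 s) - (\<Sum>s<k. ones h \<bullet> row X22 s)"
      using sum_swap_ones[OF cX21] sum_swap_ones[OF cX22] by simp
    also have "\<dots> = (\<Sum>s<k. ones g \<bullet> row X21 s - ones h \<bullet> row X22 s)" by (simp add: sum_subtractf)
    finally have "(\<Sum>s<k. int d - int a - y0) = (\<Sum>s<k. int b - int c + y0)"
      using r1 r2 by simp
    then have "int k * (int d - int a - y0) = int k * (int b - int c + y0)" by simp
    then have XX: "int d - int a - y0 = int b - int c + y0" using \<open>k>0\<close> by simp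
    define X1 where "X1 = int d - int a - y0"
    have gh: "int g - int h = 2 * X1" using XX H2 unfolding X1_def by (simp add: algebra_simps; linarith)
    have Gv: "(int g - int h) div 2 = X1" using gh by simp
    have ef: "int e - int f = 2 * (int d - int a - X1)" using XX H1 H2 unfolding X1_def by (simp add: algebra_simps; linarith)
    have Fv: "(int e - int f) div 2 = int d - int a - X1" using ef by simp
    have y1: "\<And>t. t<l \<Longrightarrow> ones e \<bullet> row Y11 t - ones f \<bullet> row Y12 t = int d - int a - X1"
      using e1[of 0] r1[of 0] \<open>k>0\<close> unfolding X1_def by fastforce
    have y2: "\<And>t. t<l \<Longrightarrow> ones e \<bullet> row Y21 t - ones f \<bullet> row Y22 t = int d - int a - X1"
      using e4[of 0] r2[of 0] XX \<open>k>0\<close> unfolding X1_def by fastforce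
    show "(\<forall>t<g. ones k \<bullet> col X11 t = ones k \<bullet> col X21 t) \<and>
        (\<forall>t<h. ones k \<bullet> col X12 t = ones k \<bullet> col X22 t) \<and>
        (\<forall>t<e. ones l \<bullet> col Y11 t = ones l \<bullet> col Y21 t) \<and>
        (\<forall>t<f. ones l \<bullet> col Y12 t = ones l \<bullet> col Y22 t) \<and>
        even (int g - int h) \<and> even (int e - int f) \<and>
        (\<forall>s<k. ones g \<bullet> row X11 s - ones h \<bullet> row X12 s = (int g - int h) div 2 \<and>
            ones g \<bullet> row X21 s - ones h \<bullet> row X22 s = (int g - int h) div 2) \<and>
        (\<forall>s<l. ones e \<bullet> row Y11 s - ones f \<bullet> row Y12 s = (int e - int f) div 2 \<and>
            ones e \<bullet> row Y21 s - ones f \<bullet> row Y22 s = (int e - int f) div 2)"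
      unfolding Gv Fv using c1 c2 c3 c4 gh ef r1 r2 y1 y2 XX unfolding X1_def by auto
  next
    assume R: "(\<forall>t<g. ones k \<bullet> col X11 t = ones k \<bullet> col X21 t) \<and>
        (\<forall>t<h. ones k \<bullet> col X12 t = ones k \<bullet> col X22 t) \<and>
        (\<forall>t<e. ones l \<bullet> col Y11 t = ones l \<bullet> col Y21 t) \<and>
        (\<forall>t<f. ones l \<bullet> col Y12 t = ones l \<bullet> col Y22 t) \<and>
        even (int g - int h) \<and> even (int e - int f) \<and>
        (\<forall>s<k. ones g \<bullet> row X11 s - ones h \<bullet> row X12 s = (int g - int h) div 2 \<and>
            ones g \<bullet> row X21 s - ones h \<bullet> row X22 s = (int g - int h) div 2) \<and>
        (\<forall>s<l. ones e \<bullet> row Y11 s - ones f \<bullet> row Y12 s = (int e - int f) div 2 \<and>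
            ones e \<bullet> row Y21 s - ones f \<bullet> row Y22 s = (int e - int f) div 2)"
    define G where "G = (int g - int h) div 2"
    define F where "F = (int e - int f) div 2"
    have G2: "2 * G = int g - int h" using R G_def by simp
    have F2: "2 * F = int e - int f" using R F_def by simp
    have c1: "\<And>t. t<g \<Longrightarrow> ones k \<bullet> col X11 t = ones k \<bullet> col X21 t"
      and c2: "\<And>t. t<h \<Longrightarrow> ones k \<bullet> col X12 t = ones k \<bullet> col X22 t"
      and c3: "\<And>t. t<e \<Longrightarrow> ones l \<bullet> col Y11 t = ones l \<bullet> col Y21 t"
      and c4: "\<And>t. t<f \<Longrightarrow> ones l \<bullet> col Y12 t = ones l \<bullet> col Y22 t" using R by auto
    have x1: "\<And>s. s<k \<Longrightarrow> ones g \<bullet> row X11 s = G + ones h \<bullet> row X12 s"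
      and x2: "\<And>s. s<k \<Longrightarrow> ones g \<bullet> row X21 s = G + ones h \<bullet> row X22 s"
      and y1: "\<And>s. s<l \<Longrightarrow> ones e \<bullet> row Y11 s = F + ones f \<bullet> row Y12 s"
      and y2: "\<And>s. s<l \<Longrightarrow> ones e \<bullet> row Y21 s = F + ones f \<bullet> row Y22 s"
      using R unfolding G_def[symmetric] F_def[symmetric] by (auto simp: algebra_simps)
  have RE_all: "\<forall>i<m. \<forall>j<m. row A i \<bullet> row A j = row Bm i \<bullet> row Bm j"
      proof (intro allI impI)
        fix i j assume i: "i<m" and j: "j<m"
        show "row A i \<bullet> row A j = row Bm i \<bullet> row Bm j"
        proof (rule split4[of i k l "\<lambda>i. row A i \<bullet> row A j = row Bm i \<bullet> row Bm j"])
          show "i < 2*k+2*l" using i m_def by simp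
        next
          fix s assume s: "s < k"
          show "row A (s) \<bullet> row A j = row Bm (s) \<bullet> row Bm j"
          proof (rule split4[of j k l "\<lambda>j. row A (s) \<bullet> row A j = row Bm (s) \<bullet> row Bm j"])
            show "j < 2*k+2*l" using j m_def by simp
          next
            fix t assume t: "t < k"
            show "row A (s) \<bullet> row A (t) = row Bm (s) \<bullet> row Bm (t)"
              using s t x1 x2 y1 y2 H1 H2 G2 F2 by (simp add: rA1 rB1 rA1 rB1 dims; linarith)
          next
            fix t assume t: "t < k"
            show "row A (s) \<bullet> row A (k+t) = row Bm (s) \<bullet> row Bm (k+t)"
              using s t x1 x2 y1 y2 H1 H2 G2 F2 by (simp add: rA1 rB1 rA2 rB2 dims; linarith)
          next
            fix t assume t: "t < l"
            show "row A (s) \<bullet> row A (k+k+t) = row Bm (s) \<bullet> row Bm (k+k+t)"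
              using s t x1 x2 y1 y2 H1 H2 G2 F2 by (simp add: rA1 rB1 rA3 rB3 dims; linarith)
          next
            fix t assume t: "t < l"
            show "row A (s) \<bullet> row A (k+k+l+t) = row Bm (s) \<bullet> row Bm (k+k+l+t)"
              using s t x1 x2 y1 y2 H1 H2 G2 F2 by (simp add: rA1 rB1 rA4 rB4 dims; linarith)
          qed
        next
          fix s assume s: "s < k"
          show "row A (k+s) \<bullet> row A j = row Bm (k+s) \<bullet> row Bm j"
          proof (rule split4[of j k l "\<lambda>j. row A (k+s) \<bullet> row A j = row Bm (k+s) \<bullet> row Bm j"])
            show "j < 2*k+2*l" using j m_def by simp
          next
            fix t assume t: "t < k"
            show "row A (k+s) \<bullet> row A (t) = row Bm (k+s) \<bullet> row Bm (t)"
              using s t x1 x2 y1 y2 H1 H2 G2 F2 by (simp add: rA2 rB2 rA1 rB1 dims; linarith)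
          next
            fix t assume t: "t < k"
            show "row A (k+s) \<bullet> row A (k+t) = row Bm (k+s) \<bullet> row Bm (k+t)"
              using s t x1 x2 y1 y2 H1 H2 G2 F2 by (simp add: rA2 rB2 rA2 rB2 dims; linarith)
          next
            fix t assume t: "t < l"
            show "row A (k+s) \<bullet> row A (k+k+t) = row Bm (k+s) \<bullet> row Bm (k+k+t)"
              using s t x1 x2 y1 y2 H1 H2 G2 F2 by (simp add: rA2 rB2 rA3 rB3 dims; linarith)
          next
            fix t assume t: "t < l"
            show "row A (k+s) \<bullet> row A (k+k+l+t) = row Bm (k+s) \<bullet> row Bm (k+k+l+t)"
              using s t x1 x2 y1 y2 H1 H2 G2 F2 by (simp add: rA2 rB2 rA4 rB4 dims; linarith)
          qed
        next
          fix s assume s: "s < l"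
          show "row A (k+k+s) \<bullet> row A j = row Bm (k+k+s) \<bullet> row Bm j"
          proof (rule split4[of j k l "\<lambda>j. row A (k+k+s) \<bullet> row A j = row Bm (k+k+s) \<bullet> row Bm j"])
            show "j < 2*k+2*l" using j m_def by simp
          next
            fix t assume t: "t < k"
            show "row A (k+k+s) \<bullet> row A (t) = row Bm (k+k+s) \<bullet> row Bm (t)"
              using s t x1 x2 y1 y2 H1 H2 G2 F2 by (simp add: rA3 rB3 rA1 rB1 dims; linarith)
          next
            fix t assume t: "t < k"
            show "row A (k+k+s) \<bullet> row A (k+t) = row Bm (k+k+s) \<bullet> row Bm (k+t)"
              using s t x1 x2 y1 y2 H1 H2 G2 F2 by (simp add: rA3 rB3 rA2 rB2 dims; linarith)
          next
            fix t assume t: "t < l"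
            show "row A (k+k+s) \<bullet> row A (k+k+t) = row Bm (k+k+s) \<bullet> row Bm (k+k+t)"
              using s t x1 x2 y1 y2 H1 H2 G2 F2 by (simp add: rA3 rB3 rA3 rB3 dims; linarith)
          next
            fix t assume t: "t < l"
            show "row A (k+k+s) \<bullet> row A (k+k+l+t) = row Bm (k+k+s) \<bullet> row Bm (k+k+l+t)"
              using s t x1 x2 y1 y2 H1 H2 G2 F2 by (simp add: rA3 rB3 rA4 rB4 dims; linarith)
          qed
        next
          fix s assume s: "s < l"
          show "row A (k+k+l+s) \<bullet> row A j = row Bm (k+k+l+s) \<bullet> row Bm j"
          proof (rule split4[of j k l "\<lambda>j. row A (k+k+l+s) \<bullet> row A j = row Bm (k+k+l+s) \<bullet> row Bm j"])
            show "j < 2*k+2*l" using j m_def by simp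
          next
            fix t assume t: "t < k"
            show "row A (k+k+l+s) \<bullet> row A (t) = row Bm (k+k+l+s) \<bullet> row Bm (t)"
              using s t x1 x2 y1 y2 H1 H2 G2 F2 by (simp add: rA4 rB4 rA1 rB1 dims; linarith)
          next
            fix t assume t: "t < k"
            show "row A (k+k+l+s) \<bullet> row A (k+t) = row Bm (k+k+l+s) \<bullet> row Bm (k+t)"
              using s t x1 x2 y1 y2 H1 H2 G2 F2 by (simp add: rA4 rB4 rA2 rB2 dims; linarith)
          next
            fix t assume t: "t < l"
            show "row A (k+k+l+s) \<bullet> row A (k+k+t) = row Bm (k+k+l+s) \<bullet> row Bm (k+k+t)"
              using s t x1 x2 y1 y2 H1 H2 G2 F2 by (simp add: rA4 rB4 rA3 rB3 dims; linarith)
          next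
            fix t assume t: "t < l"
            show "row A (k+k+l+s) \<bullet> row A (k+k+l+t) = row Bm (k+k+l+s) \<bullet> row Bm (k+k+l+t)"
              using s t x1 x2 y1 y2 H1 H2 G2 F2 by (simp add: rA4 rB4 rA4 rB4 dims; linarith)
          qed
        qed
      qed
  have CE_all: "\<forall>i<n. \<forall>j<n. col A i \<bullet> col A j = col Bm i \<bullet> col Bm j"
      proof (intro allI impI)
        fix i j assume i: "i<n" and j: "j<n"
        show "col A i \<bullet> col A j = col Bm i \<bullet> col Bm j"
        proof (rule split8[of i a b c d e f g h "\<lambda>i. col A i \<bullet> col A j = col Bm i \<bullet> col Bm j"])
          show "i < a+b+c+d+e+f+g+h" using i n_def by simp
        next
          fix s assume s: "s < a"
          show "col A (s) \<bullet> col A j = col Bm (s) \<bullet> col Bm j"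
          proof (rule split8[of j a b c d e f g h "\<lambda>j. col A (s) \<bullet> col A j = col Bm (s) \<bullet> col Bm j"])
            show "j < a+b+c+d+e+f+g+h" using j n_def by simp
          next
            fix t assume t: "t < a"
            show "col A (s) \<bullet> col A (t) = col Bm (s) \<bullet> col Bm (t)"
              using s t c1 c2 c3 c4 by (simp add: cA1[OF s] cB1[OF s] cA1[OF t] cB1[OF t] dims; linarith)
          next
            fix t assume t: "t < b"
            show "col A (s) \<bullet> col A (a+t) = col Bm (s) \<bullet> col Bm (a+t)"
              using s t c1 c2 c3 c4 by (simp add: cA1[OF s] cB1[OF s] cA2[OF t] cB2[OF t] dims; linarith)
          next
            fix t assume t: "t < c"
            show "col A (s) \<bullet> col A (a+b+t) = col Bm (s) \<bullet> col Bm (a+b+t)"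
              using s t c1 c2 c3 c4 by (simp add: cA1[OF s] cB1[OF s] cA3[OF t] cB3[OF t] dims; linarith)
          next
            fix t assume t: "t < d"
            show "col A (s) \<bullet> col A (a+b+c+t) = col Bm (s) \<bullet> col Bm (a+b+c+t)"
              using s t c1 c2 c3 c4 by (simp add: cA1[OF s] cB1[OF s] cA4[OF t] cB4[OF t] dims; linarith)
          next
            fix t assume t: "t < e"
            show "col A (s) \<bullet> col A (a+b+c+d+t) = col Bm (s) \<bullet> col Bm (a+b+c+d+t)"
              using s t c1 c2 c3 c4 by (simp add: cA1[OF s] cB1[OF s] cA5[OF t] cB5[OF t] dims; linarith)
          next
            fix t assume t: "t < f"
            show "col A (s) \<bullet> col A (a+b+c+d+e+t) = col Bm (s) \<bullet> col Bm (a+b+c+d+e+t)"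
              using s t c1 c2 c3 c4 by (simp add: cA1[OF s] cB1[OF s] cA6[OF t] cB6[OF t] dims; linarith)
          next
            fix t assume t: "t < g"
            show "col A (s) \<bullet> col A (a+b+c+d+e+f+t) = col Bm (s) \<bullet> col Bm (a+b+c+d+e+f+t)"
              using s t c1 c2 c3 c4 by (simp add: cA1[OF s] cB1[OF s] cA7[OF t] cB7[OF t] dims; linarith)
          next
            fix t assume t: "t < h"
            show "col A (s) \<bullet> col A (a+b+c+d+e+f+g+t) = col Bm (s) \<bullet> col Bm (a+b+c+d+e+f+g+t)"
              using s t c1 c2 c3 c4 by (simp add: cA1[OF s] cB1[OF s] cA8[OF t] cB8[OF t] dims; linarith)
          qed
        next
          fix s assume s: "s < b"
          show "col A (a+s) \<bullet> col A j = col Bm (a+s) \<bullet> col Bm j"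
          proof (rule split8[of j a b c d e f g h "\<lambda>j. col A (a+s) \<bullet> col A j = col Bm (a+s) \<bullet> col Bm j"])
            show "j < a+b+c+d+e+f+g+h" using j n_def by simp
          next
            fix t assume t: "t < a"
            show "col A (a+s) \<bullet> col A (t) = col Bm (a+s) \<bullet> col Bm (t)"
              using s t c1 c2 c3 c4 by (simp add: cA2[OF s] cB2[OF s] cA1[OF t] cB1[OF t] dims; linarith)
          next
            fix t assume t: "t < b"
            show "col A (a+s) \<bullet> col A (a+t) = col Bm (a+s) \<bullet> col Bm (a+t)"
              using s t c1 c2 c3 c4 by (simp add: cA2[OF s] cB2[OF s] cA2[OF t] cB2[OF t] dims; linarith)
          next
            fix t assume t: "t < c"
            show "col A (a+s) \<bullet> col A (a+b+t) = col Bm (a+s) \<bullet> col Bm (a+b+t)"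
              using s t c1 c2 c3 c4 by (simp add: cA2[OF s] cB2[OF s] cA3[OF t] cB3[OF t] dims; linarith)
          next
            fix t assume t: "t < d"
            show "col A (a+s) \<bullet> col A (a+b+c+t) = col Bm (a+s) \<bullet> col Bm (a+b+c+t)"
              using s t c1 c2 c3 c4 by (simp add: cA2[OF s] cB2[OF s] cA4[OF t] cB4[OF t] dims; linarith)
          next
            fix t assume t: "t < e"
            show "col A (a+s) \<bullet> col A (a+b+c+d+t) = col Bm (a+s) \<bullet> col Bm (a+b+c+d+t)"
              using s t c1 c2 c3 c4 by (simp add: cA2[OF s] cB2[OF s] cA5[OF t] cB5[OF t] dims; linarith)
          next
            fix t assume t: "t < f"
            show "col A (a+s) \<bullet> col A (a+b+c+d+e+t) = col Bm (a+s) \<bullet> col Bm (a+b+c+d+e+t)"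
              using s t c1 c2 c3 c4 by (simp add: cA2[OF s] cB2[OF s] cA6[OF t] cB6[OF t] dims; linarith)
          next
            fix t assume t: "t < g"
            show "col A (a+s) \<bullet> col A (a+b+c+d+e+f+t) = col Bm (a+s) \<bullet> col Bm (a+b+c+d+e+f+t)"
              using s t c1 c2 c3 c4 by (simp add: cA2[OF s] cB2[OF s] cA7[OF t] cB7[OF t] dims; linarith)
          next
            fix t assume t: "t < h"
            show "col A (a+s) \<bullet> col A (a+b+c+d+e+f+g+t) = col Bm (a+s) \<bullet> col Bm (a+b+c+d+e+f+g+t)"
              using s t c1 c2 c3 c4 by (simp add: cA2[OF s] cB2[OF s] cA8[OF t] cB8[OF t] dims; linarith)
          qed
        next
          fix s assume s: "s < c"
          show "col A (a+b+s) \<bullet> col A j = col Bm (a+b+s) \<bullet> col Bm j"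
          proof (rule split8[of j a b c d e f g h "\<lambda>j. col A (a+b+s) \<bullet> col A j = col Bm (a+b+s) \<bullet> col Bm j"])
            show "j < a+b+c+d+e+f+g+h" using j n_def by simp
          next
            fix t assume t: "t < a"
            show "col A (a+b+s) \<bullet> col A (t) = col Bm (a+b+s) \<bullet> col Bm (t)"
              using s t c1 c2 c3 c4 by (simp add: cA3[OF s] cB3[OF s] cA1[OF t] cB1[OF t] dims; linarith)
          next
            fix t assume t: "t < b"
            show "col A (a+b+s) \<bullet> col A (a+t) = col Bm (a+b+s) \<bullet> col Bm (a+t)"
              using s t c1 c2 c3 c4 by (simp add: cA3[OF s] cB3[OF s] cA2[OF t] cB2[OF t] dims; linarith)
          next
            fix t assume t: "t < c"
            show "col A (a+b+s) \<bullet> col A (a+b+t) = col Bm (a+b+s) \<bullet> col Bm (a+b+t)"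
              using s t c1 c2 c3 c4 by (simp add: cA3[OF s] cB3[OF s] cA3[OF t] cB3[OF t] dims; linarith)
          next
            fix t assume t: "t < d"
            show "col A (a+b+s) \<bullet> col A (a+b+c+t) = col Bm (a+b+s) \<bullet> col Bm (a+b+c+t)"
              using s t c1 c2 c3 c4 by (simp add: cA3[OF s] cB3[OF s] cA4[OF t] cB4[OF t] dims; linarith)
          next
            fix t assume t: "t < e"
            show "col A (a+b+s) \<bullet> col A (a+b+c+d+t) = col Bm (a+b+s) \<bullet> col Bm (a+b+c+d+t)"
              using s t c1 c2 c3 c4 by (simp add: cA3[OF s] cB3[OF s] cA5[OF t] cB5[OF t] dims; linarith)
          next
            fix t assume t: "t < f"
            show "col A (a+b+s) \<bullet> col A (a+b+c+d+e+t) = col Bm (a+b+s) \<bullet> col Bm (a+b+c+d+e+t)"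
              using s t c1 c2 c3 c4 by (simp add: cA3[OF s] cB3[OF s] cA6[OF t] cB6[OF t] dims; linarith)
          next
            fix t assume t: "t < g"
            show "col A (a+b+s) \<bullet> col A (a+b+c+d+e+f+t) = col Bm (a+b+s) \<bullet> col Bm (a+b+c+d+e+f+t)"
              using s t c1 c2 c3 c4 by (simp add: cA3[OF s] cB3[OF s] cA7[OF t] cB7[OF t] dims; linarith)
          next
            fix t assume t: "t < h"
            show "col A (a+b+s) \<bullet> col A (a+b+c+d+e+f+g+t) = col Bm (a+b+s) \<bullet> col Bm (a+b+c+d+e+f+g+t)"
              using s t c1 c2 c3 c4 by (simp add: cA3[OF s] cB3[OF s] cA8[OF t] cB8[OF t] dims; linarith)
          qed
        next
          fix s assume s: "s < d"
          show "col A (a+b+c+s) \<bullet> col A j = col Bm (a+b+c+s) \<bullet> col Bm j"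
          proof (rule split8[of j a b c d e f g h "\<lambda>j. col A (a+b+c+s) \<bullet> col A j = col Bm (a+b+c+s) \<bullet> col Bm j"])
            show "j < a+b+c+d+e+f+g+h" using j n_def by simp
          next
            fix t assume t: "t < a"
            show "col A (a+b+c+s) \<bullet> col A (t) = col Bm (a+b+c+s) \<bullet> col Bm (t)"
              using s t c1 c2 c3 c4 by (simp add: cA4[OF s] cB4[OF s] cA1[OF t] cB1[OF t] dims; linarith)
          next
            fix t assume t: "t < b"
            show "col A (a+b+c+s) \<bullet> col A (a+t) = col Bm (a+b+c+s) \<bullet> col Bm (a+t)"
              using s t c1 c2 c3 c4 by (simp add: cA4[OF s] cB4[OF s] cA2[OF t] cB2[OF t] dims; linarith)
          next
            fix t assume t: "t < c"
            show "col A (a+b+c+s) \<bullet> col A (a+b+t) = col Bm (a+b+c+s) \<bullet> col Bm (a+b+t)"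
              using s t c1 c2 c3 c4 by (simp add: cA4[OF s] cB4[OF s] cA3[OF t] cB3[OF t] dims; linarith)
          next
            fix t assume t: "t < d"
            show "col A (a+b+c+s) \<bullet> col A (a+b+c+t) = col Bm (a+b+c+s) \<bullet> col Bm (a+b+c+t)"
              using s t c1 c2 c3 c4 by (simp add: cA4[OF s] cB4[OF s] cA4[OF t] cB4[OF t] dims; linarith)
          next
            fix t assume t: "t < e"
            show "col A (a+b+c+s) \<bullet> col A (a+b+c+d+t) = col Bm (a+b+c+s) \<bullet> col Bm (a+b+c+d+t)"
              using s t c1 c2 c3 c4 by (simp add: cA4[OF s] cB4[OF s] cA5[OF t] cB5[OF t] dims; linarith)
          next
            fix t assume t: "t < f"
            show "col A (a+b+c+s) \<bullet> col A (a+b+c+d+e+t) = col Bm (a+b+c+s) \<bullet> col Bm (a+b+c+d+e+t)"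
              using s t c1 c2 c3 c4 by (simp add: cA4[OF s] cB4[OF s] cA6[OF t] cB6[OF t] dims; linarith)
          next
            fix t assume t: "t < g"
            show "col A (a+b+c+s) \<bullet> col A (a+b+c+d+e+f+t) = col Bm (a+b+c+s) \<bullet> col Bm (a+b+c+d+e+f+t)"
              using s t c1 c2 c3 c4 by (simp add: cA4[OF s] cB4[OF s] cA7[OF t] cB7[OF t] dims; linarith)
          next
            fix t assume t: "t < h"
            show "col A (a+b+c+s) \<bullet> col A (a+b+c+d+e+f+g+t) = col Bm (a+b+c+s) \<bullet> col Bm (a+b+c+d+e+f+g+t)"
              using s t c1 c2 c3 c4 by (simp add: cA4[OF s] cB4[OF s] cA8[OF t] cB8[OF t] dims; linarith)
          qed
        next
          fix s assume s: "s < e"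
          show "col A (a+b+c+d+s) \<bullet> col A j = col Bm (a+b+c+d+s) \<bullet> col Bm j"
          proof (rule split8[of j a b c d e f g h "\<lambda>j. col A (a+b+c+d+s) \<bullet> col A j = col Bm (a+b+c+d+s) \<bullet> col Bm j"])
            show "j < a+b+c+d+e+f+g+h" using j n_def by simp
          next
            fix t assume t: "t < a"
            show "col A (a+b+c+d+s) \<bullet> col A (t) = col Bm (a+b+c+d+s) \<bullet> col Bm (t)"
              using s t c1 c2 c3 c4 by (simp add: cA5[OF s] cB5[OF s] cA1[OF t] cB1[OF t] dims; linarith)
          next
            fix t assume t: "t < b"
            show "col A (a+b+c+d+s) \<bullet> col A (a+t) = col Bm (a+b+c+d+s) \<bullet> col Bm (a+t)"
              using s t c1 c2 c3 c4 by (simp add: cA5[OF s] cB5[OF s] cA2[OF t] cB2[OF t] dims; linarith)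
          next
            fix t assume t: "t < c"
            show "col A (a+b+c+d+s) \<bullet> col A (a+b+t) = col Bm (a+b+c+d+s) \<bullet> col Bm (a+b+t)"
              using s t c1 c2 c3 c4 by (simp add: cA5[OF s] cB5[OF s] cA3[OF t] cB3[OF t] dims; linarith)
          next
            fix t assume t: "t < d"
            show "col A (a+b+c+d+s) \<bullet> col A (a+b+c+t) = col Bm (a+b+c+d+s) \<bullet> col Bm (a+b+c+t)"
              using s t c1 c2 c3 c4 by (simp add: cA5[OF s] cB5[OF s] cA4[OF t] cB4[OF t] dims; linarith)
          next
            fix t assume t: "t < e"
            show "col A (a+b+c+d+s) \<bullet> col A (a+b+c+d+t) = col Bm (a+b+c+d+s) \<bullet> col Bm (a+b+c+d+t)"
              using s t c1 c2 c3 c4 by (simp add: cA5[OF s] cB5[OF s] cA5[OF t] cB5[OF t] dims; linarith)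
          next
            fix t assume t: "t < f"
            show "col A (a+b+c+d+s) \<bullet> col A (a+b+c+d+e+t) = col Bm (a+b+c+d+s) \<bullet> col Bm (a+b+c+d+e+t)"
              using s t c1 c2 c3 c4 by (simp add: cA5[OF s] cB5[OF s] cA6[OF t] cB6[OF t] dims; linarith)
          next
            fix t assume t: "t < g"
            show "col A (a+b+c+d+s) \<bullet> col A (a+b+c+d+e+f+t) = col Bm (a+b+c+d+s) \<bullet> col Bm (a+b+c+d+e+f+t)"
              using s t c1 c2 c3 c4 by (simp add: cA5[OF s] cB5[OF s] cA7[OF t] cB7[OF t] dims; linarith)
          next
            fix t assume t: "t < h"
            show "col A (a+b+c+d+s) \<bullet> col A (a+b+c+d+e+f+g+t) = col Bm (a+b+c+d+s) \<bullet> col Bm (a+b+c+d+e+f+g+t)"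
              using s t c1 c2 c3 c4 by (simp add: cA5[OF s] cB5[OF s] cA8[OF t] cB8[OF t] dims; linarith)
          qed
        next
          fix s assume s: "s < f"
          show "col A (a+b+c+d+e+s) \<bullet> col A j = col Bm (a+b+c+d+e+s) \<bullet> col Bm j"
          proof (rule split8[of j a b c d e f g h "\<lambda>j. col A (a+b+c+d+e+s) \<bullet> col A j = col Bm (a+b+c+d+e+s) \<bullet> col Bm j"])
            show "j < a+b+c+d+e+f+g+h" using j n_def by simp
          next
            fix t assume t: "t < a"
            show "col A (a+b+c+d+e+s) \<bullet> col A (t) = col Bm (a+b+c+d+e+s) \<bullet> col Bm (t)"
              using s t c1 c2 c3 c4 by (simp add: cA6[OF s] cB6[OF s] cA1[OF t] cB1[OF t] dims; linarith)
          next
            fix t assume t: "t < b"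
            show "col A (a+b+c+d+e+s) \<bullet> col A (a+t) = col Bm (a+b+c+d+e+s) \<bullet> col Bm (a+t)"
              using s t c1 c2 c3 c4 by (simp add: cA6[OF s] cB6[OF s] cA2[OF t] cB2[OF t] dims; linarith)
          next
            fix t assume t: "t < c"
            show "col A (a+b+c+d+e+s) \<bullet> col A (a+b+t) = col Bm (a+b+c+d+e+s) \<bullet> col Bm (a+b+t)"
              using s t c1 c2 c3 c4 by (simp add: cA6[OF s] cB6[OF s] cA3[OF t] cB3[OF t] dims; linarith)
          next
            fix t assume t: "t < d"
            show "col A (a+b+c+d+e+s) \<bullet> col A (a+b+c+t) = col Bm (a+b+c+d+e+s) \<bullet> col Bm (a+b+c+t)"
              using s t c1 c2 c3 c4 by (simp add: cA6[OF s] cB6[OF s] cA4[OF t] cB4[OF t] dims; linarith)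
          next
            fix t assume t: "t < e"
            show "col A (a+b+c+d+e+s) \<bullet> col A (a+b+c+d+t) = col Bm (a+b+c+d+e+s) \<bullet> col Bm (a+b+c+d+t)"
              using s t c1 c2 c3 c4 by (simp add: cA6[OF s] cB6[OF s] cA5[OF t] cB5[OF t] dims; linarith)
          next
            fix t assume t: "t < f"
            show "col A (a+b+c+d+e+s) \<bullet> col A (a+b+c+d+e+t) = col Bm (a+b+c+d+e+s) \<bullet> col Bm (a+b+c+d+e+t)"
              using s t c1 c2 c3 c4 by (simp add: cA6[OF s] cB6[OF s] cA6[OF t] cB6[OF t] dims; linarith)
          next
            fix t assume t: "t < g"
            show "col A (a+b+c+d+e+s) \<bullet> col A (a+b+c+d+e+f+t) = col Bm (a+b+c+d+e+s) \<bullet> col Bm (a+b+c+d+e+f+t)"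
              using s t c1 c2 c3 c4 by (simp add: cA6[OF s] cB6[OF s] cA7[OF t] cB7[OF t] dims; linarith)
          next
            fix t assume t: "t < h"
            show "col A (a+b+c+d+e+s) \<bullet> col A (a+b+c+d+e+f+g+t) = col Bm (a+b+c+d+e+s) \<bullet> col Bm (a+b+c+d+e+f+g+t)"
              using s t c1 c2 c3 c4 by (simp add: cA6[OF s] cB6[OF s] cA8[OF t] cB8[OF t] dims; linarith)
          qed
        next
          fix s assume s: "s < g"
          show "col A (a+b+c+d+e+f+s) \<bullet> col A j = col Bm (a+b+c+d+e+f+s) \<bullet> col Bm j"
          proof (rule split8[of j a b c d e f g h "\<lambda>j. col A (a+b+c+d+e+f+s) \<bullet> col A j = col Bm (a+b+c+d+e+f+s) \<bullet> col Bm j"])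
            show "j < a+b+c+d+e+f+g+h" using j n_def by simp
          next
            fix t assume t: "t < a"
            show "col A (a+b+c+d+e+f+s) \<bullet> col A (t) = col Bm (a+b+c+d+e+f+s) \<bullet> col Bm (t)"
              using s t c1 c2 c3 c4 by (simp add: cA7[OF s] cB7[OF s] cA1[OF t] cB1[OF t] dims; linarith)
          next
            fix t assume t: "t < b"
            show "col A (a+b+c+d+e+f+s) \<bullet> col A (a+t) = col Bm (a+b+c+d+e+f+s) \<bullet> col Bm (a+t)"
              using s t c1 c2 c3 c4 by (simp add: cA7[OF s] cB7[OF s] cA2[OF t] cB2[OF t] dims; linarith)
          next
            fix t assume t: "t < c"
            show "col A (a+b+c+d+e+f+s) \<bullet> col A (a+b+t) = col Bm (a+b+c+d+e+f+s) \<bullet> col Bm (a+b+t)"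
              using s t c1 c2 c3 c4 by (simp add: cA7[OF s] cB7[OF s] cA3[OF t] cB3[OF t] dims; linarith)
          next
            fix t assume t: "t < d"
            show "col A (a+b+c+d+e+f+s) \<bullet> col A (a+b+c+t) = col Bm (a+b+c+d+e+f+s) \<bullet> col Bm (a+b+c+t)"
              using s t c1 c2 c3 c4 by (simp add: cA7[OF s] cB7[OF s] cA4[OF t] cB4[OF t] dims; linarith)
          next
            fix t assume t: "t < e"
            show "col A (a+b+c+d+e+f+s) \<bullet> col A (a+b+c+d+t) = col Bm (a+b+c+d+e+f+s) \<bullet> col Bm (a+b+c+d+t)"
              using s t c1 c2 c3 c4 by (simp add: cA7[OF s] cB7[OF s] cA5[OF t] cB5[OF t] dims; linarith)
          next
            fix t assume t: "t < f"
            show "col A (a+b+c+d+e+f+s) \<bullet> col A (a+b+c+d+e+t) = col Bm (a+b+c+d+e+f+s) \<bullet> col Bm (a+b+c+d+e+t)"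
              using s t c1 c2 c3 c4 by (simp add: cA7[OF s] cB7[OF s] cA6[OF t] cB6[OF t] dims; linarith)
          next
            fix t assume t: "t < g"
            show "col A (a+b+c+d+e+f+s) \<bullet> col A (a+b+c+d+e+f+t) = col Bm (a+b+c+d+e+f+s) \<bullet> col Bm (a+b+c+d+e+f+t)"
              using s t c1 c2 c3 c4 by (simp add: cA7[OF s] cB7[OF s] cA7[OF t] cB7[OF t] dims; linarith)
          next
            fix t assume t: "t < h"
            show "col A (a+b+c+d+e+f+s) \<bullet> col A (a+b+c+d+e+f+g+t) = col Bm (a+b+c+d+e+f+s) \<bullet> col Bm (a+b+c+d+e+f+g+t)"
              using s t c1 c2 c3 c4 by (simp add: cA7[OF s] cB7[OF s] cA8[OF t] cB8[OF t] dims; linarith)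
          qed
        next
          fix s assume s: "s < h"
          show "col A (a+b+c+d+e+f+g+s) \<bullet> col A j = col Bm (a+b+c+d+e+f+g+s) \<bullet> col Bm j"
          proof (rule split8[of j a b c d e f g h "\<lambda>j. col A (a+b+c+d+e+f+g+s) \<bullet> col A j = col Bm (a+b+c+d+e+f+g+s) \<bullet> col Bm j"])
            show "j < a+b+c+d+e+f+g+h" using j n_def by simp
          next
            fix t assume t: "t < a"
            show "col A (a+b+c+d+e+f+g+s) \<bullet> col A (t) = col Bm (a+b+c+d+e+f+g+s) \<bullet> col Bm (t)"
              using s t c1 c2 c3 c4 by (simp add: cA8[OF s] cB8[OF s] cA1[OF t] cB1[OF t] dims; linarith)
          next
            fix t assume t: "t < b"
            show "col A (a+b+c+d+e+f+g+s) \<bullet> col A (a+t) = col Bm (a+b+c+d+e+f+g+s) \<bullet> col Bm (a+t)"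
              using s t c1 c2 c3 c4 by (simp add: cA8[OF s] cB8[OF s] cA2[OF t] cB2[OF t] dims; linarith)
          next
            fix t assume t: "t < c"
            show "col A (a+b+c+d+e+f+g+s) \<bullet> col A (a+b+t) = col Bm (a+b+c+d+e+f+g+s) \<bullet> col Bm (a+b+t)"
              using s t c1 c2 c3 c4 by (simp add: cA8[OF s] cB8[OF s] cA3[OF t] cB3[OF t] dims; linarith)
          next
            fix t assume t: "t < d"
            show "col A (a+b+c+d+e+f+g+s) \<bullet> col A (a+b+c+t) = col Bm (a+b+c+d+e+f+g+s) \<bullet> col Bm (a+b+c+t)"
              using s t c1 c2 c3 c4 by (simp add: cA8[OF s] cB8[OF s] cA4[OF t] cB4[OF t] dims; linarith)
          next
            fix t assume t: "t < e"
            show "col A (a+b+c+d+e+f+g+s) \<bullet> col A (a+b+c+d+t) = col Bm (a+b+c+d+e+f+g+s) \<bullet> col Bm (a+b+c+d+t)"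
              using s t c1 c2 c3 c4 by (simp add: cA8[OF s] cB8[OF s] cA5[OF t] cB5[OF t] dims; linarith)
          next
            fix t assume t: "t < f"
            show "col A (a+b+c+d+e+f+g+s) \<bullet> col A (a+b+c+d+e+t) = col Bm (a+b+c+d+e+f+g+s) \<bullet> col Bm (a+b+c+d+e+t)"
              using s t c1 c2 c3 c4 by (simp add: cA8[OF s] cB8[OF s] cA6[OF t] cB6[OF t] dims; linarith)
          next
            fix t assume t: "t < g"
            show "col A (a+b+c+d+e+f+g+s) \<bullet> col A (a+b+c+d+e+f+t) = col Bm (a+b+c+d+e+f+g+s) \<bullet> col Bm (a+b+c+d+e+f+t)"
              using s t c1 c2 c3 c4 by (simp add: cA8[OF s] cB8[OF s] cA7[OF t] cB7[OF t] dims; linarith)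
          next
            fix t assume t: "t < h"
            show "col A (a+b+c+d+e+f+g+s) \<bullet> col A (a+b+c+d+e+f+g+t) = col Bm (a+b+c+d+e+f+g+s) \<bullet> col Bm (a+b+c+d+e+f+g+t)"
              using s t c1 c2 c3 c4 by (simp add: cA8[OF s] cB8[OF s] cA8[OF t] cB8[OF t] dims; linarith)
          qed
        qed
      qed
    show "(\<forall>i<m. \<forall>j<m. row A i \<bullet> row A j = row Bm i \<bullet> row Bm j) \<and>
      (\<forall>i<n. \<forall>j<n. col A i \<bullet> col A j = col Bm i \<bullet> col Bm j)" using RE_all CE_all by blast
  qed
qed

end
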